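(* Let $v \sim \mathcal{N}(0, I_d)$, $p \ge 1$, $\alpha > 8$, and $r^2 = d + 2\sqrt{\alpha d} + 2\alpha$. Then for any fixed unit vector $s \in \mathbb{S}^{d-1}$, $$\mathbb{E}[|\langle v, s\rangle|^p \mid \|v\|^2 \ge r^2] \le (64 \alpha)^{p/2} + 4(8\alpha + 2p)^{p/2}.$$
   Context: $\|\cdot\|$ is the Euclidean norm and $\langle\cdot,\cdot\rangle$ the standard inner product on $\mathbb{R}^d$. *)

theory Defs
  imports "HOL-Probability.Probability"
begin

definition std_gaussian :: "'a::euclidean_space measure" where
  "std_gaussian = density lborel
     (\<lambda>x. ennreal ((2 * pi) powr (- real DIM('a) / 2) * exp (- (norm x)\<^sup>2 / 2)))"

definition cond_exp_event :: "'a measure \<Rightarrow> ('a \<Rightarrow> real) \<Rightarrow> 'a set \<Rightarrow> ennreal" where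
  "cond_exp_event M f A = (\<integral>\<^sup>+ x\<in>A. ennreal (f x) \<partial>M) / emeasure M A"

end

theory Submission
  imports Defs
begin


definition G :: "'a::euclidean_space \<Rightarrow> real" where
  "G v = exp (- (norm v)\<^sup>2 / 2)"

lemma G_pos: "0 < G v" by (simp add: G_def)
lemma G_meas[measurable]: "G \<in> borel_measurable borel" unfolding G_def by measurable

lemma nn_transl:
  fixes c :: "'a::euclidean_space"
  assumes [measurable]: "f \<in> borel_measurable borel"
  shows "(\<integral>\<^sup>+x. f x \<partial>lborel) = (\<integral>\<^sup>+x. f (c + x) \<partial>lborel)"
proof -
  have "(\<integral>\<^sup>+x. f x \<partial>lborel) = (\<integral>\<^sup>+x. f x \<partial>(distr lborel borel ((+) c)))"
    by (simp add: lborel_distr_plus)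
  also have "\<dots> = (\<integral>\<^sup>+x. f (c + x) \<partial>lborel)"
    by (simp add: nn_integral_distr)
  finally show ?thesis .
qed

lemma nn_scale:
  fixes f :: "'a::euclidean_space \<Rightarrow> ennreal"
  assumes [measurable]: "f \<in> borel_measurable borel" and c: "c \<noteq> 0"
  shows "(\<integral>\<^sup>+x. f x \<partial>lborel) = ennreal (\<bar>c\<bar>^DIM('a)) * (\<integral>\<^sup>+x. f (c *\<^sub>R x) \<partial>lborel)"
  apply (subst lborel_affine[OF c, of 0])
  apply (simp add: nn_integral_density nn_integral_distr nn_integral_cmult)
  done

lemma gauss1: "(\<integral>\<^sup>+x. ennreal (exp (- (x::real)\<^sup>2 / 2)) \<partial>lborel) = ennreal (sqrt (2*pi))"
proof -
  have "(\<integral>\<^sup>+x. ennreal (normal_density 0 1 (x::real)) \<partial>lborel) = 1"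
    by (simp add: nn_integral_eq_integral)
  moreover have "\<And>x. ennreal (exp (- x\<^sup>2 / 2)) = ennreal (sqrt (2*pi)) * ennreal (normal_density 0 1 x)"
    by (simp add: normal_density_def ennreal_mult[symmetric])
  ultimately show ?thesis by (simp add: nn_integral_cmult)
qed

lemma G_prod: "G (v::'a::euclidean_space) = (\<Prod>b\<in>Basis. exp (- (v \<bullet> b)\<^sup>2 / 2))"
proof -
  have "(norm v)\<^sup>2 = (\<Sum>b\<in>Basis. (v \<bullet> b)\<^sup>2)"
    unfolding power2_norm_eq_inner by (subst euclidean_inner) (simp add: power2_eq_square)
  then show ?thesis
    by (simp add: G_def exp_sum[symmetric] sum_negf sum_divide_distrib)
qed

lemma Z_val: "(\<integral>\<^sup>+v. ennreal (G (v::'a::euclidean_space)) \<partial>lborel) = ennreal ((sqrt (2*pi))^DIM('a))"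
proof -
  have "(\<integral>\<^sup>+v. ennreal (G (v::'a)) \<partial>lborel) = (\<integral>\<^sup>+v. (\<Prod>b\<in>Basis. ennreal (exp (- ((v::'a) \<bullet> b)\<^sup>2 / 2))) \<partial>lborel)"
    by (intro nn_integral_cong) (simp add: G_prod prod_ennreal)
  also have "\<dots> = (\<Prod>b\<in>(Basis::'a set). (\<integral>\<^sup>+x. ennreal (exp (- (x::real)\<^sup>2 / 2)) \<partial>lborel))"
    by (rule nn_integral_lborel_prod) auto
  also have "\<dots> = ennreal ((sqrt (2*pi))^DIM('a))"
    using gauss1 by (simp add: ennreal_power)
  finally show ?thesis .
qed

abbreviation Zg :: "'a::euclidean_space itself \<Rightarrow> ennreal" where
  "Zg _ \<equiv> (\<integral>\<^sup>+v. ennreal (G (v::'a)) \<partial>lborel)"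

lemma mgf_lin:
  fixes s :: "'a::euclidean_space"
  assumes s: "norm s = 1"
  shows "(\<integral>\<^sup>+v. ennreal (G v * exp (l * (v \<bullet> s))) \<partial>lborel) = ennreal (exp (l\<^sup>2/2)) * (\<integral>\<^sup>+v. ennreal (G (v::'a)) \<partial>lborel)"
proof -
  have ss: "s \<bullet> s = 1" using s by (simp add: power2_norm_eq_inner[symmetric])
  have "(\<integral>\<^sup>+v. ennreal (G v * exp (l * (v \<bullet> s))) \<partial>lborel)
      = (\<integral>\<^sup>+v. ennreal (G (l *\<^sub>R s + v) * exp (l * ((l *\<^sub>R s + v) \<bullet> s))) \<partial>lborel)"
    by (rule nn_transl) measurable
  also have "\<dots> = (\<integral>\<^sup>+v. ennreal (exp (l\<^sup>2/2)) * ennreal (G (v::'a)) \<partial>lborel)"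
  proof (intro nn_integral_cong)
    fix v :: 'a
    have n: "(norm (l *\<^sub>R s + v))\<^sup>2 = l\<^sup>2 + 2 * l * (v \<bullet> s) + (norm v)\<^sup>2"
      unfolding power2_norm_eq_inner
      by (simp add: inner_add_left inner_add_right ss inner_commute power2_eq_square algebra_simps)
    have "G (l *\<^sub>R s + v) * exp (l * ((l *\<^sub>R s + v) \<bullet> s)) = exp (l\<^sup>2/2) * G v"
    proof -
      have e: "- (l\<^sup>2 + 2 * l * (v \<bullet> s) + (norm v)\<^sup>2) / 2 + l * ((l *\<^sub>R s + v) \<bullet> s) = l\<^sup>2/2 + - (norm v)\<^sup>2 / 2"
        by (simp add: inner_add_left ss field_simps power2_eq_square)
      show ?thesis unfolding G_def n mult_exp_exp e by (simp add: exp_add)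
    qed
    then show "ennreal (G (l *\<^sub>R s + v) * exp (l * ((l *\<^sub>R s + v) \<bullet> s))) = ennreal (exp (l\<^sup>2/2)) * ennreal (G v)"
      by (simp add: ennreal_mult[symmetric] G_pos less_imp_le)
  qed
  also have "\<dots> = ennreal (exp (l\<^sup>2/2)) * (\<integral>\<^sup>+v. ennreal (G (v::'a)) \<partial>lborel)"
    by (rule nn_integral_cmult) measurable
  finally show ?thesis .
qed

lemma mgf_rad:
  assumes th: "\<theta> < 1"
  shows "(\<integral>\<^sup>+v. ennreal (G (v::'a::euclidean_space) * exp (\<theta> * (norm v)\<^sup>2 / 2)) \<partial>lborel)
     = ennreal ((1 / sqrt (1 - \<theta>)) ^ DIM('a)) * (\<integral>\<^sup>+v. ennreal (G (v::'a::euclidean_space)) \<partial>lborel)"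
proof -
  define c where "c = 1 / sqrt (1 - \<theta>)"
  have c: "c > 0" using th by (simp add: c_def)
  have c2: "c\<^sup>2 * (1 - \<theta>) = 1" using th by (simp add: c_def power_divide)
  have "(\<integral>\<^sup>+v. ennreal (G (v::'a) * exp (\<theta> * (norm v)\<^sup>2 / 2)) \<partial>lborel)
     = ennreal (\<bar>c\<bar> ^ DIM('a)) * (\<integral>\<^sup>+v. ennreal (G (c *\<^sub>R v) * exp (\<theta> * (norm (c *\<^sub>R (v::'a)))\<^sup>2 / 2)) \<partial>lborel)"
    by (rule nn_scale) (measurable, use c in simp)
  also have "(\<lambda>v::'a. ennreal (G (c *\<^sub>R v) * exp (\<theta> * (norm (c *\<^sub>R v))\<^sup>2 / 2))) = (\<lambda>v. ennreal (G v))"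
  proof
    fix v :: 'a
    have "G (c *\<^sub>R v) * exp (\<theta> * (norm (c *\<^sub>R v))\<^sup>2 / 2) = exp (- (c\<^sup>2 * (1 - \<theta>)) * (norm v)\<^sup>2 / 2)"
      unfolding G_def using c by (simp add: exp_add[symmetric] power_mult_distrib algebra_simps)
    then show "ennreal (G (c *\<^sub>R v) * exp (\<theta> * (norm (c *\<^sub>R v))\<^sup>2 / 2)) = ennreal (G v)"
      unfolding c2 by (simp add: G_def)
  qed
  finally show ?thesis using c by (simp add: c_def)
qed

lemma refl_int:
  fixes f :: "'a::euclidean_space \<Rightarrow> ennreal"
  assumes [measurable]: "f \<in> borel_measurable borel"
  shows "(\<integral>\<^sup>+x. f x \<partial>lborel) = (\<integral>\<^sup>+x. f (- x) \<partial>lborel)"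
  using nn_scale[of f "-1"] by simp



lemma small_num:
  fixes a b rho :: real
  assumes b8: "b\<^sup>2 > 8" and b0: "b \<ge> 0" and a0: "a \<ge> 0" and ab: "a \<le> 4 * b" and rho: "rho \<ge> 0"
    and r: "rho\<^sup>2 = a\<^sup>2 + 2 * (b * a) + 2 * b\<^sup>2"
  shows "rho\<^sup>2 / 2 + 2 * rho + 1 \<le> 24 * b\<^sup>2"
proof -
  have "a\<^sup>2 \<le> (4 * b)\<^sup>2" using a0 ab by (intro power_mono) auto
  then have a2: "a\<^sup>2 \<le> 16 * b\<^sup>2" by (simp add: power_mult_distrib)
  have "b * a \<le> b * (4 * b)" using b0 ab by (intro mult_left_mono) auto
  then have ba: "b * a \<le> 4 * b\<^sup>2" by (simp add: power2_eq_square)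
  have sq: "0 \<le> (rho / 2 - 2)\<^sup>2" by simp
  then have "2 * rho \<le> rho\<^sup>2 / 4 + 4" by (simp add: power2_eq_square field_simps)
  then show ?thesis using a2 ba r b8 by linarith
qed

lemma b_ge: fixes b :: real assumes "b\<^sup>2 > 8" "b \<ge> 0" shows "b \<ge> 21/8"
proof (rule ccontr)
  assume "\<not> b \<ge> 21/8"
  then have "b\<^sup>2 \<le> (21/8)\<^sup>2" using assms by (intro power_mono) auto
  then show False using assms by (simp add: power2_eq_square)
qed

lemma large_num:
  fixes a b :: real
  assumes b8: "b\<^sup>2 > 8" and b0: "b \<ge> 0" and ab: "a > 4 * b"
  defines "del \<equiv> (a\<^sup>2 + 2 * (b * a) + 2 * b\<^sup>2) / (a\<^sup>2 - 4 * a) - 1"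
  shows "(a\<^sup>2 / 2) * (del - del\<^sup>2 / 2) - del * (a\<^sup>2 + 6 * a) / 2 \<ge> - 24 * b\<^sup>2 + 1"
proof -
  have bb: "b \<ge> 21/8" using b_ge b8 b0 by blast
  have a4: "a > 4" using ab bb by linarith
  define u where "u = (2 * (b * a) + 2 * b\<^sup>2 + 4 * a) / (a - 4)"
  have m: "a\<^sup>2 - 4 * a = a * (a - 4)" by (simp add: power2_eq_square algebra_simps)
  have m0: "a * (a - 4) > 0" using a4 by simp
  have delu: "a * del = u"
    unfolding del_def u_def m using a4 by (simp add: field_simps power2_eq_square)
  have u0: "u \<ge> 0" unfolding u_def using a4 b0 by simp
  have key: "2 * (b * a) + 2 * b\<^sup>2 + 4 * a \<le> 13/2 * b * (a - 4)"
  proof -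
    have "a * (9/2 * b - 4) \<ge> 4 * b * (9/2 * b - 4)" using ab bb by (intro mult_right_mono) auto
    moreover have "b * (16 * b - 42) \<ge> 0" using bb b0 by simp
    ultimately show ?thesis by (simp add: algebra_simps power2_eq_square)
  qed
  have u1: "u \<le> 13/2 * b"
    unfolding u_def using key a4 by (simp add: divide_le_eq mult.commute mult.left_commute)
  have "u\<^sup>2 \<le> (13/2 * b)\<^sup>2" using u0 u1 by (intro power_mono) auto
  then have u2: "u\<^sup>2 \<le> 169/4 * b\<^sup>2" by (simp add: power2_eq_square)
  have e: "(a\<^sup>2 / 2) * (del - del\<^sup>2 / 2) - del * (a\<^sup>2 + 6 * a) / 2 = - u\<^sup>2 / 4 - 3 * u"
    unfolding delu[symmetric] by (simp add: power2_eq_square field_simps)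
  have "13/2 * b * b \<ge> 13/2 * b * (21/8)" using bb b0 by (intro mult_left_mono) auto
  then have "b\<^sup>2 * 13/2 \<ge> 13/2 * 21/8 * b" by (simp add: power2_eq_square algebra_simps)
  then show ?thesis unfolding e using u1 u2 bb by linarith
qed



lemma powr_exp_bound:
  fixes y \<mu> p :: real
  assumes y: "y > 0" and mu: "\<mu> > 0" and p: "p > 0"
  shows "y powr p \<le> (p / (exp 1 * \<mu>)) powr p * exp (\<mu> * y)"
proof -
  have "ln (\<mu> * y / p) \<le> \<mu> * y / p - 1" by (rule ln_le_minus_one) (use y mu p in simp)
  then have "ln \<mu> + ln y - ln p \<le> \<mu> * y / p - 1" using y mu p by (simp add: ln_div ln_mult)
  then have "p * (ln \<mu> + ln y - ln p) \<le> p * (\<mu> * y / p - 1)" using p by (intro mult_left_mono) auto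
  moreover have "p * (\<mu> * y / p - 1) = \<mu> * y - p" using p by (simp add: field_simps)
  ultimately have h: "p * ln y \<le> p * (ln p - 1 - ln \<mu>) + \<mu> * y" by (simp add: algebra_simps)
  have "y powr p = exp (p * ln y)" using y by (simp add: powr_def)
  also have "\<dots> \<le> exp (p * (ln p - 1 - ln \<mu>) + \<mu> * y)" using h by simp
  also have "\<dots> = exp (p * (ln p - 1 - ln \<mu>)) * exp (\<mu> * y)" by (simp add: exp_add)
  also have "exp (p * (ln p - 1 - ln \<mu>)) = (p / (exp 1 * \<mu>)) powr p"
  proof -
    have "ln (p / (exp 1 * \<mu>)) = ln p - 1 - ln \<mu>" using p mu by (simp add: ln_div ln_mult)
    moreover have "p / (exp 1 * \<mu>) > 0" using p mu by simp
    ultimately show ?thesis using p mu by (simp add: powr_def)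
  qed
  finally show ?thesis .
qed

lemma pw_tail:
  fixes x p t :: real
  assumes p: "p \<ge> 1" and t: "t > 0"
  defines "lam \<equiv> sqrt p / 2 + 3 * sqrt t / 4"
  shows "\<bar>x\<bar> powr p * indicator {x. t < x\<^sup>2} x
     \<le> (2 * sqrt p / exp 1) powr p * exp (- 3 * t / 4) * (exp (lam * x) + exp (- lam * x))"
proof (cases "t < x\<^sup>2")
  case False
  then show ?thesis by (simp add: indicator_def)
next
  case True
  define y where "y = \<bar>x\<bar>"
  have st: "sqrt t < y" using True t unfolding y_def by (metis real_sqrt_abs real_sqrt_less_mono)
  have y0: "y > 0" using st t by (smt (verit) real_sqrt_gt_zero)
  have sp: "sqrt p > 0" using p by simp
  have "y powr p \<le> (p / (exp 1 * (sqrt p / 2))) powr p * exp ((sqrt p / 2) * y)"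
    by (rule powr_exp_bound) (use y0 sp p in auto)
  also have "p / (exp 1 * (sqrt p / 2)) = 2 * sqrt p / exp 1"
    using p by (simp add: field_simps)
  finally have a: "y powr p \<le> (2 * sqrt p / exp 1) powr p * exp ((sqrt p / 2) * y)" .
  have b: "1 \<le> exp (3 * sqrt t / 4 * (y - sqrt t))" using st t by (intro one_le_exp_iff[THEN iffD2] mult_nonneg_nonneg) auto
  define K where "K = (2 * sqrt p / exp 1) powr p"
  have K0: "K \<ge> 0" by (simp add: K_def)
  have c: "exp ((sqrt p / 2) * y) * exp (3 * sqrt t / 4 * (y - sqrt t)) = exp (lam * y) * exp (- 3 * t / 4)"
  proof -
    have "(sqrt p / 2) * y + 3 * sqrt t / 4 * (y - sqrt t) = lam * y + (- 3 * t / 4)"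
    proof -
      define q where "q = sqrt t"
      have tq: "t = q * q" using t by (simp add: q_def)
      show ?thesis unfolding lam_def q_def[symmetric] tq by (simp add: field_simps)
    qed
    then show ?thesis by (simp add: mult_exp_exp)
  qed
  have d: "exp (lam * y) \<le> exp (lam * x) + exp (- lam * x)"
    unfolding y_def by (cases "x \<ge> 0") (auto simp: add_increasing add_increasing2)
  have "y powr p \<le> K * exp ((sqrt p / 2) * y) * 1" using a by (simp add: K_def)
  also have "\<dots> \<le> K * exp ((sqrt p / 2) * y) * exp (3 * sqrt t / 4 * (y - sqrt t))"
    by (rule mult_left_mono[OF b]) (simp add: K0)
  also have "\<dots> = K * (exp (lam * y) * exp (- 3 * t / 4))" by (simp only: mult.assoc c)
  also have "\<dots> \<le> K * ((exp (lam * x) + exp (- lam * x)) * exp (- 3 * t / 4))"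
    by (intro mult_left_mono mult_right_mono d K0) simp_all
  finally have "y powr p \<le> (2 * sqrt p / exp 1) powr p * ((exp (lam * x) + exp (- lam * x)) * exp (- 3 * t / 4))"
    by (simp add: K_def)
  then show ?thesis using True by (simp add: y_def indicator_def algebra_simps)
qed

lemma ennreal_dbl:
  fixes a b :: real and Z :: ennreal
  assumes "a \<ge> 0" "b \<ge> 0"
  shows "ennreal a * (ennreal b * Z + ennreal b * Z) = ennreal (2 * (a * b)) * Z"
proof -
  have "ennreal b * Z + ennreal b * Z = 2 * (ennreal b * Z)" by (rule mult_2[symmetric])
  moreover have "ennreal (2 * (a * b)) = 2 * (ennreal a * ennreal b)"
    using assms by (simp add: ennreal_mult)
  ultimately show ?thesis by (simp only: mult.assoc mult.left_commute)
qed

lemma tail_const: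
  fixes p t :: real
  assumes p: "p \<ge> 1" and t: "t > 0"
  defines "lam \<equiv> sqrt p / 2 + 3 * sqrt t / 4"
  shows "(2 * sqrt p / exp 1) powr p * exp (- 3 * t / 4) * exp (lam\<^sup>2 / 2) \<le> sqrt (2 * p) powr p * exp (- 3 * t / 8)"
proof -
  have l2: "lam\<^sup>2 \<le> p + 3 * t / 4"
  proof -
    have "p + 3 * t / 4 - lam\<^sup>2 = 3/4 * (sqrt p - sqrt t / 2)\<^sup>2"
      using p t by (simp add: lam_def power2_eq_square algebra_simps)
    moreover have "0 \<le> 3/4 * (sqrt p - sqrt t / 2)\<^sup>2" by simp
    ultimately show ?thesis by linarith
  qed
  have "(2 * sqrt p / exp 1) powr p * exp (- 3 * t / 4) * exp (lam\<^sup>2 / 2)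
      = (2 * sqrt p / exp 1) powr p * exp (- 3 * t / 4 + lam\<^sup>2 / 2)" by (simp only: exp_add mult.assoc)
  also have "\<dots> \<le> (2 * sqrt p / exp 1) powr p * exp (p / 2 + (- 3 * t / 8))"
    using l2 by (intro mult_left_mono) auto
  also have "\<dots> = ((2 * sqrt p / exp 1) * exp (1/2)) powr p * exp (- 3 * t / 8)"
  proof -
    have "exp (p / 2) = exp (1/2) powr p" by (simp add: powr_def)
    moreover have "((2 * sqrt p / exp 1) * exp (1/2)) powr p = (2 * sqrt p / exp 1) powr p * exp (1/2) powr p"
      by (rule powr_mult)
    ultimately show ?thesis by (simp only: exp_add mult.assoc)
  qed
  also have "\<dots> \<le> sqrt (2 * p) powr p * exp (- 3 * t / 8)"
  proof (intro mult_right_mono powr_mono2)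
    have e2: "2 \<le> exp (1::real)" using exp_ge_add_one_self[of 1] by simp
    have "2 * sqrt p / exp 1 * exp (1 / 2) = 2 * sqrt p / exp (1/2)"
      by (simp add: field_simps flip: exp_add)
    also have "\<dots> \<le> sqrt 2 * sqrt p"
    proof -
      have "sqrt 2 * exp (1/2) \<ge> 2"
      proof -
        have "(sqrt 2 * exp (1/2::real))\<^sup>2 = 2 * exp 1"
        proof -
          have "exp (1/2::real) * exp (1/2) = exp 1" by (simp flip: exp_add)
          moreover have "sqrt 2 * sqrt 2 = (2::real)" by simp
          ultimately show ?thesis unfolding power2_eq_square by (metis mult.assoc mult.left_commute)
        qed
        also have "\<dots> \<ge> 4" using e2 by simp
        finally have "2\<^sup>2 \<le> (sqrt 2 * exp (1/2::real))\<^sup>2" by simp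
        then show ?thesis by (rule power2_le_imp_le) simp
      qed
      then have "2 * sqrt p \<le> sqrt 2 * exp (1/2) * sqrt p" using p by (intro mult_right_mono) auto
      then show ?thesis by (simp add: divide_le_eq algebra_simps)
    qed
    finally show "2 * sqrt p / exp 1 * exp (1 / 2) \<le> sqrt (2 * p)" by (simp add: real_sqrt_mult)
  qed (use p in auto)
  finally show ?thesis .
qed

lemma tail_int:
  fixes s :: "'a::euclidean_space" and p t :: real
  assumes s: "norm s = 1" and p: "p \<ge> 1" and t: "t > 0"
  shows "(\<integral>\<^sup>+v. ennreal (G v * (\<bar>v \<bullet> s\<bar> powr p * indicator {v. t < (v \<bullet> s)\<^sup>2} v)) \<partial>lborel)
     \<le> ennreal (2 * sqrt (2 * p) powr p * exp (- 3 * t / 8)) * (\<integral>\<^sup>+v. ennreal (G (v::'a)) \<partial>lborel)"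
proof -
  define lam where "lam = sqrt p / 2 + 3 * sqrt t / 4"
  define K where "K = (2 * sqrt p / exp 1) powr p * exp (- 3 * t / 4)"
  have K0: "K \<ge> 0" by (simp add: K_def)
  have "(\<integral>\<^sup>+v. ennreal (G v * (\<bar>v \<bullet> s\<bar> powr p * indicator {v. t < (v \<bullet> s)\<^sup>2} v)) \<partial>lborel)
     \<le> (\<integral>\<^sup>+v. ennreal K * (ennreal (G v * exp (lam * (v \<bullet> s))) + ennreal (G v * exp ((- lam) * (v \<bullet> s)))) \<partial>lborel)"
  proof (intro nn_integral_mono)
    fix v :: 'a
    have "\<bar>v \<bullet> s\<bar> powr p * indicator {x. t < x\<^sup>2} (v \<bullet> s) \<le> K * (exp (lam * (v \<bullet> s)) + exp (- lam * (v \<bullet> s)))"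
      using pw_tail[OF p t, of "v \<bullet> s"] by (simp add: K_def lam_def)
    then have "G v * (\<bar>v \<bullet> s\<bar> powr p * indicator {x. t < x\<^sup>2} (v \<bullet> s)) \<le> G v * (K * (exp (lam * (v \<bullet> s)) + exp (- lam * (v \<bullet> s))))"
      by (intro mult_left_mono) (auto simp: G_pos less_imp_le)
    moreover have "indicator {v. t < (v \<bullet> s)\<^sup>2} v = (indicator {x. t < x\<^sup>2} (v \<bullet> s) :: real)"
      by (simp add: indicator_def)
    ultimately show "ennreal (G v * (\<bar>v \<bullet> s\<bar> powr p * indicator {v. t < (v \<bullet> s)\<^sup>2} v))
        \<le> ennreal K * (ennreal (G v * exp (lam * (v \<bullet> s))) + ennreal (G v * exp ((- lam) * (v \<bullet> s))))"
      using K0 G_pos[of v]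
      by (simp add: ennreal_mult[symmetric] ennreal_plus[symmetric] algebra_simps del: ennreal_plus)
  qed
  also have "\<dots> = ennreal K * ((\<integral>\<^sup>+v. ennreal (G v * exp (lam * (v \<bullet> s))) \<partial>lborel) + (\<integral>\<^sup>+v. ennreal (G v * exp ((- lam) * (v \<bullet> s))) \<partial>lborel))"
  proof -
    have "(\<integral>\<^sup>+v. ennreal (G v * exp (lam * (v \<bullet> s))) + ennreal (G v * exp ((- lam) * (v \<bullet> s))) \<partial>lborel)
      = (\<integral>\<^sup>+v. ennreal (G v * exp (lam * (v \<bullet> s))) \<partial>lborel) + (\<integral>\<^sup>+v. ennreal (G v * exp ((- lam) * (v \<bullet> s))) \<partial>lborel)"
      by (rule nn_integral_add) measurable
    moreover have "(\<lambda>v. ennreal (G v * exp (lam * (v \<bullet> s))) + ennreal (G v * exp ((- lam) * (v \<bullet> s)))) \<in> borel_measurable lborel"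
      by measurable
    ultimately show ?thesis by (simp add: nn_integral_cmult)
  qed
  also have "\<dots> = ennreal K * (ennreal (exp (lam\<^sup>2/2)) * (\<integral>\<^sup>+v. ennreal (G (v::'a)) \<partial>lborel) + ennreal (exp (lam\<^sup>2/2)) * (\<integral>\<^sup>+v. ennreal (G (v::'a)) \<partial>lborel))"
    using mgf_lin[OF s, of lam] mgf_lin[OF s, of "-lam"] by simp
  also have "\<dots> = ennreal (2 * (K * exp (lam\<^sup>2/2))) * (\<integral>\<^sup>+v. ennreal (G (v::'a)) \<partial>lborel)"
    using K0 by (rule ennreal_dbl) simp
  also have "\<dots> \<le> ennreal (2 * sqrt (2 * p) powr p * exp (- 3 * t / 8)) * (\<integral>\<^sup>+v. ennreal (G (v::'a)) \<partial>lborel)"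
    using tail_const[OF p t] by (intro mult_right_mono ennreal_leI) (simp_all add: K_def lam_def)
  finally show ?thesis .
qed



lemma ln_lower2:
  fixes x :: real assumes x: "x \<ge> 0"
  shows "x - x\<^sup>2 / 2 \<le> ln (1 + x)"
proof -
  define f where "f = (\<lambda>y::real. ln (1 + y) - y + y\<^sup>2 / 2)"
  have "f 0 \<le> f x"
  proof (rule DERIV_nonneg_imp_increasing_open[OF x])
    fix y :: real assume y: "0 < y" "y < x"
    have "DERIV f y :> (1 / (1 + y) - 1 + y)"
      unfolding f_def using y by (auto intro!: derivative_eq_intros simp: field_simps)
    moreover have "1 / (1 + y) - 1 + y \<ge> 0"
    proof -
      have "1 / (1 + y) - 1 + y = y\<^sup>2 / (1 + y)" using y by (simp add: field_simps power2_eq_square)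
      then show ?thesis using y by simp
    qed
    ultimately show "\<exists>d. DERIV f y :> d \<and> d \<ge> 0" by blast
  next
    show "continuous_on {0..x} f"
      unfolding f_def by (intro continuous_intros) auto
  qed
  then show ?thesis by (simp add: f_def)
qed

lemma inv_sqrt_pow:
  fixes x :: real assumes x: "x > 0"
  shows "(1 / sqrt x) ^ n = exp (- (real n / 2) * ln x)"
proof -
  have "(1 / sqrt x) ^ n = exp (real n * ln (1 / sqrt x))"
    using x by (subst exp_of_nat_mult) simp
  also have "ln (1 / sqrt x) = - ln x / 2" using x by (simp add: ln_div ln_sqrt)
  finally show ?thesis by simp
qed

lemma sqrt_pow:
  fixes x :: real assumes x: "x > 0"
  shows "(sqrt x) ^ n = exp ((real n / 2) * ln x)"
proof -
  have "(sqrt x) ^ n = exp (real n * ln (sqrt x))"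
    using x by (subst exp_of_nat_mult) simp
  also have "ln (sqrt x) = ln x / 2" using x by (simp add: ln_sqrt)
  finally show ?thesis by simp
qed

lemma ennreal_numeral_mult: "0 \<le> y \<Longrightarrow> ennreal (numeral n * y) = numeral n * ennreal y"
  by (subst ennreal_mult) auto

lemma G_minus: "G (- v) = G v" by (simp add: G_def)

lemma half_space:
  fixes s :: "'a::euclidean_space"
  shows "(\<integral>\<^sup>+v. ennreal (G (v::'a)) \<partial>lborel)
     \<le> 2 * (\<integral>\<^sup>+v. ennreal (G v * indicator {v. 0 \<le> v \<bullet> s} v) \<partial>lborel)"
proof -
  let ?P = "(\<integral>\<^sup>+v. ennreal (G v * indicator {v. 0 \<le> v \<bullet> s} v) \<partial>lborel)"
  let ?N = "(\<integral>\<^sup>+v. ennreal (G v * indicator {v. v \<bullet> s \<le> 0} v) \<partial>lborel)"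
  have N: "?N = ?P"
    by (subst refl_int) (measurable, simp add: G_minus indicator_def)
  have "(\<integral>\<^sup>+v. ennreal (G (v::'a)) \<partial>lborel) \<le> (\<integral>\<^sup>+v. ennreal (G v * indicator {v. 0 \<le> v \<bullet> s} v) + ennreal (G v * indicator {v. v \<bullet> s \<le> 0} v) \<partial>lborel)"
  proof (intro nn_integral_mono)
    fix v :: 'a
    show "ennreal (G v) \<le> ennreal (G v * indicator {v. 0 \<le> v \<bullet> s} v) + ennreal (G v * indicator {v. v \<bullet> s \<le> 0} v)"
      by (cases "0 \<le> v \<bullet> s") (auto simp: indicator_def)
  qed
  also have "\<dots> = ?P + ?N" by (rule nn_integral_add) measurable
  also have "\<dots> = 2 * ?P" by (simp add: N mult_2)
  finally show ?thesis .
qed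

lemma upper_lin:
  fixes s :: "'a::euclidean_space"
  assumes s: "norm s = 1"
  shows "(\<integral>\<^sup>+v. ennreal (G v * indicator {v. 2 < v \<bullet> s} v) \<partial>lborel)
     \<le> ennreal (exp (-2)) * (\<integral>\<^sup>+v. ennreal (G (v::'a)) \<partial>lborel)"
proof -
  have "(\<integral>\<^sup>+v. ennreal (G v * indicator {v. 2 < v \<bullet> s} v) \<partial>lborel)
     \<le> (\<integral>\<^sup>+v. ennreal (exp (-4)) * ennreal (G v * exp (2 * (v \<bullet> s))) \<partial>lborel)"
  proof (intro nn_integral_mono)
    fix v :: 'a
    have "indicator {v. 2 < v \<bullet> s} v \<le> exp (-4) * exp (2 * (v \<bullet> s))"
    proof (cases "2 < v \<bullet> s")
      case True
      then have "0 \<le> -4 + 2 * (v \<bullet> s)" by simp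
      then have "1 \<le> exp (-4 + 2 * (v \<bullet> s))" by simp
      then have "1 \<le> exp (-4) * exp (2 * (v \<bullet> s))" unfolding exp_add .
      then show ?thesis using True by (simp add: indicator_def)
    qed (simp add: indicator_def)
    then have "G v * indicator {v. 2 < v \<bullet> s} v \<le> G v * (exp (-4) * exp (2 * (v \<bullet> s)))"
      by (intro mult_left_mono) (auto simp: G_pos less_imp_le)
    then show "ennreal (G v * indicator {v. 2 < v \<bullet> s} v) \<le> ennreal (exp (-4)) * ennreal (G v * exp (2 * (v \<bullet> s)))"
      using G_pos[of v] by (simp add: ennreal_mult[symmetric] mult_ac)
  qed
  also have "\<dots> = ennreal (exp (-4)) * (ennreal (exp (2\<^sup>2/2)) * (\<integral>\<^sup>+v. ennreal (G (v::'a)) \<partial>lborel))"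
    by (subst nn_integral_cmult) (measurable, simp add: mgf_lin[OF s])
  also have "\<dots> = ennreal (exp (-2)) * (\<integral>\<^sup>+v. ennreal (G (v::'a)) \<partial>lborel)"
  proof -
    have "exp (-4) * exp (2\<^sup>2/2) = exp (-2::real)" by (simp flip: exp_add)
    then show ?thesis by (simp add: mult.assoc[symmetric] ennreal_mult[symmetric])
  qed
  finally show ?thesis .
qed

lemma strip:
  fixes s :: "'a::euclidean_space"
  assumes s: "norm s = 1"
  shows "(\<integral>\<^sup>+v. ennreal (G (v::'a)) \<partial>lborel)
     \<le> 4 * (\<integral>\<^sup>+v. ennreal (G v * indicator {v. 0 \<le> v \<bullet> s \<and> v \<bullet> s \<le> 2} v) \<partial>lborel)"
proof -
  define z where "z = (sqrt (2*pi))^DIM('a)"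
  have Z: "(\<integral>\<^sup>+v. ennreal (G (v::'a)) \<partial>lborel) = ennreal z" unfolding z_def by (rule Z_val)
  have z0: "z \<ge> 0" by (simp add: z_def)
  let ?I1 = "(\<integral>\<^sup>+v. ennreal (G v * indicator {v. 0 \<le> v \<bullet> s \<and> v \<bullet> s \<le> 2} v) \<partial>lborel)"
  let ?I2 = "(\<integral>\<^sup>+v. ennreal (G v * indicator {v. 2 < v \<bullet> s} v) \<partial>lborel)"
  have "ennreal z \<le> 2 * (\<integral>\<^sup>+v. ennreal (G v * indicator {v. 0 \<le> v \<bullet> s} v) \<partial>lborel)"
    using half_space[of s] Z by simp
  also have "\<dots> \<le> 2 * (\<integral>\<^sup>+v. ennreal (G v * indicator {v. 0 \<le> v \<bullet> s \<and> v \<bullet> s \<le> 2} v) + ennreal (G v * indicator {v. 2 < v \<bullet> s} v) \<partial>lborel)"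
    by (intro mult_left_mono nn_integral_mono) (auto simp: indicator_def)
  also have "\<dots> = 2 * (?I1 + ?I2)"
  proof -
    have "(\<integral>\<^sup>+v. ennreal (G v * indicator {v. 0 \<le> v \<bullet> s \<and> v \<bullet> s \<le> 2} v) + ennreal (G v * indicator {v. 2 < v \<bullet> s} v) \<partial>lborel) = ?I1 + ?I2"
      by (rule nn_integral_add) measurable
    then show ?thesis by simp
  qed
  also have "\<dots> \<le> 2 * (?I1 + ennreal (exp (-2) * z))"
    using upper_lin[OF s] Z z0 by (intro mult_left_mono add_left_mono) (simp_all add: ennreal_mult)
  also have "\<dots> = 2 * ?I1 + ennreal (2 * exp (-2) * z)"
  proof -
    have "ennreal (2 * exp (-2) * z) = 2 * ennreal (exp (-2) * z)"
      using z0 by (subst mult.assoc, subst ennreal_mult) auto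
    then show ?thesis by (simp add: distrib_left)
  qed
  finally have h: "ennreal z \<le> 2 * ?I1 + ennreal (2 * exp (-2) * z)" .
  have "ennreal z - ennreal (2 * exp (-2) * z) \<le> 2 * ?I1"
    using h by (subst ennreal_minus_le_iff) (simp add: add.commute)
  moreover have "ennreal z - ennreal (2 * exp (-2) * z) = ennreal (z - 2 * exp (-2) * z)"
    using z0 by (simp add: ennreal_minus)
  ultimately have h2: "ennreal (z - 2 * exp (-2) * z) \<le> 2 * ?I1" by simp
  have "z \<le> 2 * (z - 2 * exp (-2) * z)"
  proof -
    have "exp (2::real) \<ge> 4"
    proof -
      have "exp (2::real) = exp 1 * exp 1" by (simp flip: exp_add)
      moreover have "exp (1::real) \<ge> 2" using exp_ge_add_one_self[of 1] by simp
      ultimately show ?thesis using mult_mono[of 2 "exp (1::real)" 2 "exp 1"] by simp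
    qed
    then have "exp (-2::real) \<le> 1/4" by (simp add: exp_minus field_simps)
    then have "exp (-2) * z \<le> 1/4 * z" using z0 by (intro mult_right_mono) auto
    then show ?thesis by simp
  qed
  then have "ennreal z \<le> ennreal (2 * (z - 2 * exp (-2) * z))" by (rule ennreal_leI)
  also have "\<dots> = 2 * ennreal (z - 2 * exp (-2) * z)"
  proof (rule ennreal_numeral_mult)
    have "0 \<le> z - w" if "z \<le> 2 * (z - w)" for w :: real using that z0 by (simp add: algebra_simps)
    then show "0 \<le> z - 2 * exp (-2) * z" using \<open>z \<le> 2 * (z - 2 * exp (-2) * z)\<close> by blast
  qed
  also have "\<dots> \<le> 2 * (2 * ?I1)" using h2 by (rule mult_left_mono) simp
  finally show ?thesis using Z by (simp add: mult.assoc[symmetric])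
qed

lemma lower_small:
  fixes s :: "'a::euclidean_space"
  assumes s: "norm s = 1" and rho: "\<rho> \<ge> 0"
  shows "ennreal (exp (- \<rho>\<^sup>2 / 2 - 2 * \<rho>)) * (\<integral>\<^sup>+v. ennreal (G (v::'a)) \<partial>lborel)
     \<le> 4 * (\<integral>\<^sup>+v. ennreal (G (v::'a) * indicator {v. \<rho>\<^sup>2 \<le> (norm v)\<^sup>2} v) \<partial>lborel)"
proof -
  have ss: "s \<bullet> s = 1" using s by (simp add: power2_norm_eq_inner[symmetric])
  define E where "E = exp (- \<rho>\<^sup>2 / 2 - 2 * \<rho>)"
  have E0: "E \<ge> 0" by (simp add: E_def)
  let ?I1 = "(\<integral>\<^sup>+v. ennreal (G v * indicator {v. 0 \<le> v \<bullet> s \<and> v \<bullet> s \<le> 2} v) \<partial>lborel)"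
  have main: "ennreal E * ?I1 \<le> (\<integral>\<^sup>+v. ennreal (G (v::'a) * indicator {v. \<rho>\<^sup>2 \<le> (norm v)\<^sup>2} v) \<partial>lborel)"
  proof -
  have "ennreal E * ?I1 = (\<integral>\<^sup>+v. ennreal E * ennreal (G v * indicator {v. 0 \<le> v \<bullet> s \<and> v \<bullet> s \<le> 2} v) \<partial>lborel)"
    by (rule nn_integral_cmult[symmetric]) measurable
  also have "\<dots> \<le> (\<integral>\<^sup>+v. ennreal (G (\<rho> *\<^sub>R s + v) * indicator {v. \<rho> \<le> v \<bullet> s} (\<rho> *\<^sub>R s + v)) \<partial>lborel)"
  proof (intro nn_integral_mono)
    fix v :: 'a
    have n: "(norm (\<rho> *\<^sub>R s + v))\<^sup>2 = \<rho>\<^sup>2 + 2 * \<rho> * (v \<bullet> s) + (norm v)\<^sup>2"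
      unfolding power2_norm_eq_inner
      by (simp add: inner_add_left inner_add_right ss inner_commute power2_eq_square algebra_simps)
    show "ennreal E * ennreal (G v * indicator {v. 0 \<le> v \<bullet> s \<and> v \<bullet> s \<le> 2} v)
        \<le> ennreal (G (\<rho> *\<^sub>R s + v) * indicator {v. \<rho> \<le> v \<bullet> s} (\<rho> *\<^sub>R s + v))"
    proof (cases "0 \<le> v \<bullet> s \<and> v \<bullet> s \<le> 2")
      case True
      have "G (\<rho> *\<^sub>R s + v) = exp (- \<rho>\<^sup>2 / 2 - \<rho> * (v \<bullet> s)) * G v"
        unfolding G_def n by (simp add: mult_exp_exp field_simps)
      moreover have "E \<le> exp (- \<rho>\<^sup>2 / 2 - \<rho> * (v \<bullet> s))"
      proof -
        have "\<rho> * (v \<bullet> s) \<le> \<rho> * 2" by (rule mult_left_mono) (use True rho in auto)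
        then show ?thesis by (simp add: E_def)
      qed
      moreover have "\<rho> \<le> (\<rho> *\<^sub>R s + v) \<bullet> s" using True by (simp add: inner_add_left ss)
      ultimately have "E * G v \<le> G (\<rho> *\<^sub>R s + v)"
        using G_pos[of v] by (simp add: mult_right_mono)
      moreover have "ennreal E * ennreal (G v) = ennreal (E * G v)"
        using E0 G_pos[of v] by (simp add: ennreal_mult)
      ultimately show ?thesis using True \<open>\<rho> \<le> (\<rho> *\<^sub>R s + v) \<bullet> s\<close>
        by (simp add: indicator_def ennreal_leI)
    qed (auto simp: indicator_def)
  qed
  also have "\<dots> = (\<integral>\<^sup>+v. ennreal (G v * indicator {v. \<rho> \<le> v \<bullet> s} v) \<partial>lborel)"
    by (rule nn_transl[symmetric]) measurable
  also have "\<dots> \<le> (\<integral>\<^sup>+v. ennreal (G (v::'a) * indicator {v. \<rho>\<^sup>2 \<le> (norm v)\<^sup>2} v) \<partial>lborel)"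
  proof (intro nn_integral_mono)
    fix v :: 'a
    have "\<rho> \<le> v \<bullet> s \<Longrightarrow> \<rho>\<^sup>2 \<le> (norm v)\<^sup>2"
    proof -
      assume h: "\<rho> \<le> v \<bullet> s"
      have "v \<bullet> s \<le> norm v" using Cauchy_Schwarz_ineq2[of v s] s by simp
      then show ?thesis using h rho by (intro power_mono) auto
    qed
    then show "ennreal (G v * indicator {v. \<rho> \<le> v \<bullet> s} v) \<le> ennreal (G (v::'a) * indicator {v. \<rho>\<^sup>2 \<le> (norm v)\<^sup>2} v)"
      using G_pos[of v] by (auto simp: indicator_def)
  qed
  finally show ?thesis .
  qed
  have "ennreal E * (\<integral>\<^sup>+v. ennreal (G (v::'a)) \<partial>lborel) \<le> ennreal E * (4 * ?I1)"
    by (intro mult_left_mono strip[OF s]) simp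
  also have "\<dots> = 4 * (ennreal E * ?I1)" by (simp add: mult_ac)
  also have "\<dots> \<le> 4 * (\<integral>\<^sup>+v. ennreal (G (v::'a) * indicator {v. \<rho>\<^sup>2 \<le> (norm v)\<^sup>2} v) \<partial>lborel)"
    using main by (rule mult_left_mono) simp
  finally show ?thesis by (simp add: E_def)
qed



lemma chernoff_low:
  assumes a: "a \<ge> 2" and D: "real DIM('a::euclidean_space) = a\<^sup>2"
  shows "(\<integral>\<^sup>+v. ennreal (G (v::'a) * indicator {v. (norm v)\<^sup>2 < a\<^sup>2 - 4 * a} v) \<partial>lborel)
     \<le> ennreal (exp (-2)) * (\<integral>\<^sup>+v. ennreal (G (v::'a)) \<partial>lborel)"
proof -
  define th where "th = 2 / a"
  define m where "m = a\<^sup>2 - 4 * a"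
  have th0: "0 \<le> th" "th \<le> 1" using a by (auto simp: th_def)
  have "(\<integral>\<^sup>+v. ennreal (G (v::'a) * indicator {v. (norm v)\<^sup>2 < a\<^sup>2 - 4 * a} v) \<partial>lborel)
     \<le> (\<integral>\<^sup>+v. ennreal (exp (th * m / 2)) * ennreal (G (v::'a) * exp ((- th) * (norm v)\<^sup>2 / 2)) \<partial>lborel)"
  proof (intro nn_integral_mono)
    fix v :: 'a
    have "indicator {v. (norm v)\<^sup>2 < a\<^sup>2 - 4 * a} v \<le> exp (th * m / 2) * exp ((- th) * (norm v)\<^sup>2 / 2)"
    proof (cases "(norm v)\<^sup>2 < a\<^sup>2 - 4 * a")
      case True
      then have "0 \<le> th * (m - (norm v)\<^sup>2) / 2" using th0 by (simp add: m_def)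
      then have "1 \<le> exp (th * m / 2 + (- th) * (norm v)\<^sup>2 / 2)" by (simp add: algebra_simps)
      then have "1 \<le> exp (th * m / 2) * exp ((- th) * (norm v)\<^sup>2 / 2)" unfolding exp_add .
      then show ?thesis using True by simp
    qed simp
    then have "G v * indicator {v. (norm v)\<^sup>2 < a\<^sup>2 - 4 * a} v \<le> G v * (exp (th * m / 2) * exp ((- th) * (norm v)\<^sup>2 / 2))"
      by (intro mult_left_mono) (auto simp: G_pos less_imp_le)
    then show "ennreal (G v * indicator {v. (norm v)\<^sup>2 < a\<^sup>2 - 4 * a} v) \<le> ennreal (exp (th * m / 2)) * ennreal (G v * exp ((- th) * (norm v)\<^sup>2 / 2))"
      using G_pos[of v] by (simp add: ennreal_mult[symmetric] mult_ac ennreal_leI)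
  qed
  also have "\<dots> = ennreal (exp (th * m / 2)) * (\<integral>\<^sup>+v. ennreal (G (v::'a) * exp ((- th) * (norm v)\<^sup>2 / 2)) \<partial>lborel)"
    by (rule nn_integral_cmult) measurable
  also have "\<dots> = ennreal (exp (th * m / 2)) * (ennreal ((1 / sqrt (1 - (- th))) ^ DIM('a)) * (\<integral>\<^sup>+v. ennreal (G (v::'a)) \<partial>lborel))"
    using mgf_rad[of "- th", where 'a='a] th0 by simp
  also have "\<dots> = ennreal (exp (th * m / 2) * (1 / sqrt (1 + th)) ^ DIM('a)) * (\<integral>\<^sup>+v. ennreal (G (v::'a)) \<partial>lborel)"
    using th0 by (subst ennreal_mult) (auto simp: mult.assoc)
  also have "\<dots> \<le> ennreal (exp (-2)) * (\<integral>\<^sup>+v. ennreal (G (v::'a)) \<partial>lborel)"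
  proof (intro mult_right_mono ennreal_leI)
    have "(1 / sqrt (1 + th)) ^ DIM('a) = exp (- (a\<^sup>2 / 2) * ln (1 + th))"
      using th0 by (simp add: inv_sqrt_pow D)
    also have "\<dots> \<le> exp (- (a\<^sup>2 / 2) * (th - th\<^sup>2))"
      using ln_one_plus_pos_lower_bound[OF th0] by (simp add: mult_left_mono)
    finally have "exp (th * m / 2) * (1 / sqrt (1 + th)) ^ DIM('a) \<le> exp (th * m / 2) * exp (- (a\<^sup>2 / 2) * (th - th\<^sup>2))"
      by (simp add: mult_left_mono)
    also have "\<dots> = exp (th * m / 2 - (a\<^sup>2 / 2) * (th - th\<^sup>2))" by (simp add: exp_add[symmetric])
    also have "th * m / 2 - (a\<^sup>2 / 2) * (th - th\<^sup>2) = -2"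
      using a by (simp add: th_def m_def field_simps power2_eq_square)
    finally show "exp (th * m / 2) * (1 / sqrt (1 + th)) ^ DIM('a) \<le> exp (-2)" by simp
  qed simp
  finally show ?thesis .
qed

lemma chernoff_high:
  assumes a: "a \<ge> 3" and D: "real DIM('a::euclidean_space) = a\<^sup>2"
  shows "(\<integral>\<^sup>+v. ennreal (G (v::'a) * indicator {v. a\<^sup>2 + 6 * a < (norm v)\<^sup>2} v) \<partial>lborel)
     \<le> ennreal (exp (-9/4)) * (\<integral>\<^sup>+v. ennreal (G (v::'a)) \<partial>lborel)"
proof -
  define th where "th = 3 / (2 * a)"
  define M where "M = a\<^sup>2 + 6 * a"
  have th0: "0 \<le> th" "th \<le> 1/2" using a by (auto simp: th_def)
  have "(\<integral>\<^sup>+v. ennreal (G (v::'a) * indicator {v. a\<^sup>2 + 6 * a < (norm v)\<^sup>2} v) \<partial>lborel)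
     \<le> (\<integral>\<^sup>+v. ennreal (exp (- th * M / 2)) * ennreal (G (v::'a) * exp (th * (norm v)\<^sup>2 / 2)) \<partial>lborel)"
  proof (intro nn_integral_mono)
    fix v :: 'a
    have "indicator {v. a\<^sup>2 + 6 * a < (norm v)\<^sup>2} v \<le> exp (- th * M / 2) * exp (th * (norm v)\<^sup>2 / 2)"
    proof (cases "a\<^sup>2 + 6 * a < (norm v)\<^sup>2")
      case True
      then have "0 \<le> th * ((norm v)\<^sup>2 - M) / 2" using th0 by (simp add: M_def)
      then have "1 \<le> exp (- th * M / 2 + th * (norm v)\<^sup>2 / 2)" by (simp add: algebra_simps)
      then have "1 \<le> exp (- th * M / 2) * exp (th * (norm v)\<^sup>2 / 2)" unfolding exp_add .
      then show ?thesis using True by simp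
    qed simp
    then have "G v * indicator {v. a\<^sup>2 + 6 * a < (norm v)\<^sup>2} v \<le> G v * (exp (- th * M / 2) * exp (th * (norm v)\<^sup>2 / 2))"
      by (intro mult_left_mono) (auto simp: G_pos less_imp_le)
    then show "ennreal (G v * indicator {v. a\<^sup>2 + 6 * a < (norm v)\<^sup>2} v) \<le> ennreal (exp (- th * M / 2)) * ennreal (G v * exp (th * (norm v)\<^sup>2 / 2))"
      using G_pos[of v] by (simp add: ennreal_mult[symmetric] mult_ac ennreal_leI)
  qed
  also have "\<dots> = ennreal (exp (- th * M / 2)) * (\<integral>\<^sup>+v. ennreal (G (v::'a) * exp (th * (norm v)\<^sup>2 / 2)) \<partial>lborel)"
    by (rule nn_integral_cmult) measurable
  also have "\<dots> = ennreal (exp (- th * M / 2)) * (ennreal ((1 / sqrt (1 - th)) ^ DIM('a)) * (\<integral>\<^sup>+v. ennreal (G (v::'a)) \<partial>lborel))"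
    using mgf_rad[of "th", where 'a='a] th0 by simp
  also have "\<dots> = ennreal (exp (- th * M / 2) * (1 / sqrt (1 - th)) ^ DIM('a)) * (\<integral>\<^sup>+v. ennreal (G (v::'a)) \<partial>lborel)"
    using th0 by (subst ennreal_mult) (auto simp: mult.assoc)
  also have "\<dots> \<le> ennreal (exp (-9/4)) * (\<integral>\<^sup>+v. ennreal (G (v::'a)) \<partial>lborel)"
  proof (intro mult_right_mono ennreal_leI)
    have "(1 / sqrt (1 - th)) ^ DIM('a) = exp (- (a\<^sup>2 / 2) * ln (1 - th))"
      using th0 by (simp add: inv_sqrt_pow D)
    also have "\<dots> \<le> exp ((a\<^sup>2 / 2) * (th + 2 * th\<^sup>2))"
    proof -
      have "- ln (1 - th) \<le> th + 2 * th\<^sup>2" using ln_one_minus_pos_lower_bound[OF th0] by linarith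
      then have "(a\<^sup>2 / 2) * (- ln (1 - th)) \<le> (a\<^sup>2 / 2) * (th + 2 * th\<^sup>2)" by (rule mult_left_mono) simp
      then show ?thesis by simp
    qed
    finally have "exp (- th * M / 2) * (1 / sqrt (1 - th)) ^ DIM('a) \<le> exp (- th * M / 2) * exp ((a\<^sup>2 / 2) * (th + 2 * th\<^sup>2))"
      by (simp add: mult_left_mono)
    also have "\<dots> = exp (- th * M / 2 + (a\<^sup>2 / 2) * (th + 2 * th\<^sup>2))" by (simp add: exp_add[symmetric])
    also have "- th * M / 2 + (a\<^sup>2 / 2) * (th + 2 * th\<^sup>2) = -9/4"
      using a by (simp add: th_def M_def field_simps power2_eq_square)
    finally show "exp (- th * M / 2) * (1 / sqrt (1 - th)) ^ DIM('a) \<le> exp (-9/4)" by simp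
  qed simp
  finally show ?thesis .
qed

lemma exp_m2: "exp (-2::real) \<le> 1/4"
proof -
  have "exp (2::real) = exp 1 * exp 1" by (simp flip: exp_add)
  moreover have "exp (1::real) \<ge> 2" using exp_ge_add_one_self[of 1] by simp
  ultimately have "exp (2::real) \<ge> 4" using mult_mono[of 2 "exp (1::real)" 2 "exp 1"] by simp
  then show ?thesis by (simp add: exp_minus field_simps)
qed

lemma window:
  assumes a: "a \<ge> 3" and D: "real DIM('a::euclidean_space) = a\<^sup>2"
  shows "(\<integral>\<^sup>+v. ennreal (G (v::'a)) \<partial>lborel)
     \<le> 2 * (\<integral>\<^sup>+v. ennreal (G (v::'a) * indicator {v. a\<^sup>2 - 4 * a \<le> (norm v)\<^sup>2 \<and> (norm v)\<^sup>2 \<le> a\<^sup>2 + 6 * a} v) \<partial>lborel)"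
proof -
  define z where "z = (sqrt (2*pi))^DIM('a)"
  have Z: "(\<integral>\<^sup>+v. ennreal (G (v::'a)) \<partial>lborel) = ennreal z" unfolding z_def by (rule Z_val)
  have z0: "z \<ge> 0" by (simp add: z_def)
  let ?W = "(\<integral>\<^sup>+v. ennreal (G (v::'a) * indicator {v. a\<^sup>2 - 4 * a \<le> (norm v)\<^sup>2 \<and> (norm v)\<^sup>2 \<le> a\<^sup>2 + 6 * a} v) \<partial>lborel)"
  let ?L = "(\<integral>\<^sup>+v. ennreal (G (v::'a) * indicator {v. (norm v)\<^sup>2 < a\<^sup>2 - 4 * a} v) \<partial>lborel)"
  let ?U = "(\<integral>\<^sup>+v. ennreal (G (v::'a) * indicator {v. a\<^sup>2 + 6 * a < (norm v)\<^sup>2} v) \<partial>lborel)"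
  have "ennreal z \<le> (\<integral>\<^sup>+v. ennreal (G (v::'a) * indicator {v. a\<^sup>2 - 4 * a \<le> (norm v)\<^sup>2 \<and> (norm v)\<^sup>2 \<le> a\<^sup>2 + 6 * a} v)
      + (ennreal (G (v::'a) * indicator {v. (norm v)\<^sup>2 < a\<^sup>2 - 4 * a} v) + ennreal (G (v::'a) * indicator {v. a\<^sup>2 + 6 * a < (norm v)\<^sup>2} v)) \<partial>lborel)"
    unfolding Z[symmetric] by (intro nn_integral_mono) (auto simp: indicator_def)
  also have "\<dots> = ?W + (?L + ?U)"
  proof -
    have "(\<integral>\<^sup>+v. ennreal (G (v::'a) * indicator {v. (norm v)\<^sup>2 < a\<^sup>2 - 4 * a} v) + ennreal (G (v::'a) * indicator {v. a\<^sup>2 + 6 * a < (norm v)\<^sup>2} v) \<partial>lborel) = ?L + ?U"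
      by (rule nn_integral_add) measurable
    moreover have "(\<integral>\<^sup>+v. ennreal (G (v::'a) * indicator {v. a\<^sup>2 - 4 * a \<le> (norm v)\<^sup>2 \<and> (norm v)\<^sup>2 \<le> a\<^sup>2 + 6 * a} v)
      + (ennreal (G (v::'a) * indicator {v. (norm v)\<^sup>2 < a\<^sup>2 - 4 * a} v) + ennreal (G (v::'a) * indicator {v. a\<^sup>2 + 6 * a < (norm v)\<^sup>2} v)) \<partial>lborel)
      = ?W + (\<integral>\<^sup>+v. ennreal (G (v::'a) * indicator {v. (norm v)\<^sup>2 < a\<^sup>2 - 4 * a} v) + ennreal (G (v::'a) * indicator {v. a\<^sup>2 + 6 * a < (norm v)\<^sup>2} v) \<partial>lborel)"
      by (rule nn_integral_add) measurable
    ultimately show ?thesis by simp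
  qed
  also have "\<dots> \<le> ?W + (ennreal (exp (-2) * z) + ennreal (exp (-9/4) * z))"
    using chernoff_low[of a, OF _ D] chernoff_high[OF a D] a Z z0
    by (intro add_left_mono add_mono) (simp_all add: ennreal_mult)
  also have "\<dots> = ?W + ennreal ((exp (-2) + exp (-9/4)) * z)"
    using z0 by (simp add: distrib_right)
  finally have h: "ennreal z \<le> ?W + ennreal ((exp (-2) + exp (-9/4)) * z)" .
  have "ennreal z - ennreal ((exp (-2) + exp (-9/4)) * z) \<le> ?W"
    using h by (subst ennreal_minus_le_iff) (simp add: add.commute)
  moreover have "ennreal z - ennreal ((exp (-2) + exp (-9/4)) * z) = ennreal (z - (exp (-2) + exp (-9/4)) * z)"
    using z0 by (simp add: ennreal_minus)
  ultimately have h2: "ennreal (z - (exp (-2) + exp (-9/4)) * z) \<le> ?W" by simp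
  have q: "exp (-2) + exp (-9/4) \<le> (1/2::real)"
  proof -
    have "exp (-9/4) \<le> exp (-2::real)" by simp
    then show ?thesis using exp_m2 by linarith
  qed
  have zq: "z \<le> 2 * (z - (exp (-2) + exp (-9/4)) * z)"
  proof -
    have "(exp (-2) + exp (-9/4)) * z \<le> 1/2 * z" using q z0 by (intro mult_right_mono) auto
    then show ?thesis by simp
  qed
  have "ennreal z \<le> ennreal (2 * (z - (exp (-2) + exp (-9/4)) * z))" using zq by (rule ennreal_leI)
  also have "\<dots> = 2 * ennreal (z - (exp (-2) + exp (-9/4)) * z)"
  proof (rule ennreal_numeral_mult)
    have "0 \<le> z - w" if "z \<le> 2 * (z - w)" for w :: real using that z0 by (simp add: algebra_simps)
    then show "0 \<le> z - (exp (-2) + exp (-9/4)) * z" using zq by blast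
  qed
  also have "\<dots> \<le> 2 * ?W" using h2 by (rule mult_left_mono) simp
  finally show ?thesis using Z by simp
qed

lemma lower_large:
  assumes a: "a \<ge> 5" and D: "real DIM('a::euclidean_space) = a\<^sup>2" and R: "a\<^sup>2 - 4 * a \<le> R2"
  shows "ennreal ((sqrt (R2 / (a\<^sup>2 - 4 * a))) ^ DIM('a) * exp (- (R2 / (a\<^sup>2 - 4 * a) - 1) * (a\<^sup>2 + 6 * a) / 2))
      * (\<integral>\<^sup>+v. ennreal (G (v::'a)) \<partial>lborel)
     \<le> 2 * (\<integral>\<^sup>+v. ennreal (G (v::'a) * indicator {v. R2 \<le> (norm v)\<^sup>2} v) \<partial>lborel)"
proof -
  define m where "m = a\<^sup>2 - 4 * a"
  define M where "M = a\<^sup>2 + 6 * a"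
  define del where "del = R2 / m - 1"
  define sg where "sg = sqrt (R2 / m)"
  have m0: "m > 0" using a by (simp add: m_def power2_eq_square)
  have Rm: "m \<le> R2" using R by (simp add: m_def)
  have del0: "del \<ge> 0" using m0 Rm by (simp add: del_def field_simps)
  have sg0: "sg > 0" using m0 Rm by (simp add: sg_def)
  have sg2: "sg\<^sup>2 = 1 + del" using m0 Rm by (simp add: sg_def del_def)
  have R2eq: "R2 = (1 + del) * m" using m0 by (simp add: del_def field_simps)
  let ?W = "(\<integral>\<^sup>+v. ennreal (G (v::'a) * indicator {v. a\<^sup>2 - 4 * a \<le> (norm v)\<^sup>2 \<and> (norm v)\<^sup>2 \<le> a\<^sup>2 + 6 * a} v) \<partial>lborel)"
  define E where "E = exp (- del * M / 2)"
  have E0: "E \<ge> 0" by (simp add: E_def)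
  have scale: "(\<integral>\<^sup>+v. ennreal (G (v::'a) * indicator {v. R2 \<le> (norm v)\<^sup>2} v) \<partial>lborel)
     = ennreal (\<bar>sg\<bar> ^ DIM('a)) * (\<integral>\<^sup>+v. ennreal (G (sg *\<^sub>R v) * indicator {v. R2 \<le> (norm v)\<^sup>2} (sg *\<^sub>R (v::'a))) \<partial>lborel)"
    by (rule nn_scale) (measurable, use sg0 in simp)
  have pw: "ennreal E * ?W \<le> (\<integral>\<^sup>+v. ennreal (G (sg *\<^sub>R v) * indicator {v. R2 \<le> (norm v)\<^sup>2} (sg *\<^sub>R (v::'a))) \<partial>lborel)"
  proof -
    have "ennreal E * ?W = (\<integral>\<^sup>+v. ennreal E * ennreal (G (v::'a) * indicator {v. a\<^sup>2 - 4 * a \<le> (norm v)\<^sup>2 \<and> (norm v)\<^sup>2 \<le> a\<^sup>2 + 6 * a} v) \<partial>lborel)"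
      by (rule nn_integral_cmult[symmetric]) measurable
    also have "\<dots> \<le> (\<integral>\<^sup>+v. ennreal (G (sg *\<^sub>R v) * indicator {v. R2 \<le> (norm v)\<^sup>2} (sg *\<^sub>R (v::'a))) \<partial>lborel)"
    proof (intro nn_integral_mono)
      fix v :: 'a
      show "ennreal E * ennreal (G (v::'a) * indicator {v. a\<^sup>2 - 4 * a \<le> (norm v)\<^sup>2 \<and> (norm v)\<^sup>2 \<le> a\<^sup>2 + 6 * a} v)
          \<le> ennreal (G (sg *\<^sub>R v) * indicator {v. R2 \<le> (norm v)\<^sup>2} (sg *\<^sub>R (v::'a)))"
      proof (cases "a\<^sup>2 - 4 * a \<le> (norm v)\<^sup>2 \<and> (norm v)\<^sup>2 \<le> a\<^sup>2 + 6 * a")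
        case True
        have nv: "(norm (sg *\<^sub>R v))\<^sup>2 = (1 + del) * (norm v)\<^sup>2"
          using sg0 sg2 by (simp add: power_mult_distrib)
        have in1: "R2 \<le> (norm (sg *\<^sub>R v))\<^sup>2"
          unfolding nv R2eq using True del0 by (intro mult_left_mono) (auto simp: m_def)
        have "G (sg *\<^sub>R v) = exp (- del * (norm v)\<^sup>2 / 2) * G v"
          unfolding G_def nv by (simp add: mult_exp_exp field_simps)
        moreover have "E \<le> exp (- del * (norm v)\<^sup>2 / 2)"
        proof -
          have "del * (norm v)\<^sup>2 \<le> del * M" using True del0 by (intro mult_left_mono) (auto simp: M_def)
          then show ?thesis by (simp add: E_def)
        qed
        ultimately have "E * G v \<le> G (sg *\<^sub>R v)" using G_pos[of v] by (simp add: mult_right_mono)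
        moreover have "ennreal E * ennreal (G v) = ennreal (E * G v)"
          using E0 G_pos[of v] by (simp add: ennreal_mult)
        ultimately show ?thesis using True in1 by (simp add: indicator_def ennreal_leI)
      qed (auto simp: indicator_def)
    qed
    finally show ?thesis .
  qed
  have "ennreal (sg ^ DIM('a) * E) * (\<integral>\<^sup>+v. ennreal (G (v::'a)) \<partial>lborel)
      \<le> ennreal (sg ^ DIM('a) * E) * (2 * ?W)"
    by (intro mult_left_mono window[of a]) (use a D in auto)
  also have "\<dots> = 2 * (ennreal (sg ^ DIM('a)) * (ennreal E * ?W))"
    using sg0 E0 by (subst ennreal_mult) (auto simp: mult_ac)
  also have "\<dots> \<le> 2 * (ennreal (sg ^ DIM('a)) * (\<integral>\<^sup>+v. ennreal (G (sg *\<^sub>R v) * indicator {v. R2 \<le> (norm v)\<^sup>2} (sg *\<^sub>R (v::'a))) \<partial>lborel))"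
    using pw by (intro mult_left_mono) auto
  also have "\<dots> = 2 * (\<integral>\<^sup>+v. ennreal (G (v::'a) * indicator {v. R2 \<le> (norm v)\<^sup>2} v) \<partial>lborel)"
    using scale sg0 by simp
  finally show ?thesis by (simp add: sg_def E_def del_def M_def m_def)
qed



lemma lower_all:
  fixes s :: "'a::euclidean_space" and \<alpha> r :: real
  assumes s: "norm s = 1" and al: "\<alpha> > 8"
    and r: "r\<^sup>2 = real DIM('a) + 2 * sqrt (\<alpha> * real DIM('a)) + 2 * \<alpha>"
  shows "ennreal (2 * exp (- 24 * \<alpha>)) * (\<integral>\<^sup>+v. ennreal (G (v::'a)) \<partial>lborel)
    \<le> 4 * (\<integral>\<^sup>+v. ennreal (G (v::'a) * indicator {v. r\<^sup>2 \<le> (norm v)\<^sup>2} v) \<partial>lborel)"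
proof -
  define a where "a = sqrt (real DIM('a))"
  define b where "b = sqrt \<alpha>"
  have a0: "a \<ge> 0" and b0: "b \<ge> 0" using al by (auto simp: a_def b_def)
  have D: "real DIM('a) = a\<^sup>2" by (simp add: a_def)
  have bsq: "b\<^sup>2 = \<alpha>" using al by (simp add: b_def)
  have b8: "b\<^sup>2 > 8" using bsq al by simp
  have sab: "sqrt (\<alpha> * real DIM('a)) = b * a" by (simp add: a_def b_def real_sqrt_mult)
  have r2: "r\<^sup>2 = a\<^sup>2 + 2 * (b * a) + 2 * b\<^sup>2" using r unfolding sab by (simp add: D bsq)
  have e1: "2 * exp (- 24 * \<alpha>) \<le> exp (1 - 24 * \<alpha>)"
  proof -
    have "(2::real) \<le> exp 1" using exp_ge_add_one_self[of 1] by simp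
    then have "2 * exp (- 24 * \<alpha>) \<le> exp 1 * exp (- 24 * \<alpha>)" by (intro mult_right_mono) auto
    then show ?thesis by (simp add: exp_add[symmetric])
  qed
  show ?thesis
  proof (cases "a \<le> 4 * b")
    case True
    define rho where "rho = sqrt (r\<^sup>2)"
    have rho0: "rho \<ge> 0" by (simp add: rho_def)
    have rho2: "rho\<^sup>2 = r\<^sup>2" by (simp add: rho_def)
    have num: "rho\<^sup>2 / 2 + 2 * rho + 1 \<le> 24 * b\<^sup>2"
      by (rule small_num[OF b8 b0 a0 True rho0]) (simp add: rho2 r2)
    have "exp (1 - 24 * \<alpha>) \<le> exp (- rho\<^sup>2 / 2 - 2 * rho)"
      unfolding exp_le_cancel_iff using num bsq by linarith
    then have "2 * exp (- 24 * \<alpha>) \<le> exp (- rho\<^sup>2 / 2 - 2 * rho)"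
      using e1 by linarith
    then have "ennreal (2 * exp (- 24 * \<alpha>)) * (\<integral>\<^sup>+v. ennreal (G (v::'a)) \<partial>lborel)
        \<le> ennreal (exp (- rho\<^sup>2 / 2 - 2 * rho)) * (\<integral>\<^sup>+v. ennreal (G (v::'a)) \<partial>lborel)"
      by (intro mult_right_mono ennreal_leI) auto
    also have "\<dots> \<le> 4 * (\<integral>\<^sup>+v. ennreal (G (v::'a) * indicator {v. rho\<^sup>2 \<le> (norm v)\<^sup>2} v) \<partial>lborel)"
      by (rule lower_small[OF s rho0])
    finally show ?thesis unfolding rho2 .
  next
    case False
    then have ab: "a > 4 * b" by simp
    have bb: "b \<ge> 21/8" using b_ge b8 b0 by blast
    have a5: "a \<ge> 5" using ab bb by linarith
    have R: "a\<^sup>2 - 4 * a \<le> r\<^sup>2"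
    proof -
      have "0 \<le> b * a" "0 \<le> b\<^sup>2" using a0 b0 by auto
      then show ?thesis using r2 a0 by linarith
    qed
    define del where "del = (a\<^sup>2 + 2 * (b * a) + 2 * b\<^sup>2) / (a\<^sup>2 - 4 * a) - 1"
    have m0: "a\<^sup>2 - 4 * a > 0" using a5 by (simp add: power2_eq_square)
    have del0: "del \<ge> 0" unfolding del_def using m0 a0 b0 by (simp add: field_simps add_increasing)
    have num: "(a\<^sup>2 / 2) * (del - del\<^sup>2 / 2) - del * (a\<^sup>2 + 6 * a) / 2 \<ge> - 24 * b\<^sup>2 + 1"
      unfolding del_def by (rule large_num[OF b8 b0 ab])
    have sq: "(sqrt (r\<^sup>2 / (a\<^sup>2 - 4 * a))) ^ DIM('a) = exp ((a\<^sup>2 / 2) * ln (1 + del))"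
    proof -
      have "r\<^sup>2 / (a\<^sup>2 - 4 * a) = 1 + del" by (simp add: del_def r2)
      then show ?thesis using del0 by (simp add: sqrt_pow D)
    qed
    have "exp (1 - 24 * \<alpha>) \<le> exp ((a\<^sup>2 / 2) * (del - del\<^sup>2 / 2) - del * (a\<^sup>2 + 6 * a) / 2)"
      unfolding exp_le_cancel_iff using num bsq by linarith
    then have "2 * exp (- 24 * \<alpha>) \<le> exp ((a\<^sup>2 / 2) * (del - del\<^sup>2 / 2) - del * (a\<^sup>2 + 6 * a) / 2)"
      using e1 by linarith
    also have "\<dots> \<le> exp ((a\<^sup>2 / 2) * ln (1 + del) - del * (a\<^sup>2 + 6 * a) / 2)"
      using ln_lower2[OF del0] by (simp add: mult_left_mono)
    also have "\<dots> = (sqrt (r\<^sup>2 / (a\<^sup>2 - 4 * a))) ^ DIM('a) * exp (- (r\<^sup>2 / (a\<^sup>2 - 4 * a) - 1) * (a\<^sup>2 + 6 * a) / 2)"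
    proof -
      have q: "r\<^sup>2 / (a\<^sup>2 - 4 * a) = 1 + del" by (simp add: del_def r2)
      have "exp ((a\<^sup>2 / 2) * ln (1 + del) - del * (a\<^sup>2 + 6 * a) / 2)
          = exp ((a\<^sup>2 / 2) * ln (1 + del)) * exp (- del * (a\<^sup>2 + 6 * a) / 2)"
        by (simp add: exp_add[symmetric])
      moreover have "(sqrt (1 + del)) ^ DIM('a) = exp ((a\<^sup>2 / 2) * ln (1 + del))"
        using del0 by (simp add: sqrt_pow D)
      ultimately show ?thesis unfolding q by simp
    qed
    finally have "ennreal (2 * exp (- 24 * \<alpha>)) * (\<integral>\<^sup>+v. ennreal (G (v::'a)) \<partial>lborel)
        \<le> ennreal ((sqrt (r\<^sup>2 / (a\<^sup>2 - 4 * a))) ^ DIM('a) * exp (- (r\<^sup>2 / (a\<^sup>2 - 4 * a) - 1) * (a\<^sup>2 + 6 * a) / 2)) * (\<integral>\<^sup>+v. ennreal (G (v::'a)) \<partial>lborel)"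
      by (intro mult_right_mono ennreal_leI) auto
    also have "\<dots> \<le> 2 * (\<integral>\<^sup>+v. ennreal (G (v::'a) * indicator {v. r\<^sup>2 \<le> (norm v)\<^sup>2} v) \<partial>lborel)"
      by (rule lower_large[OF a5 D R])
    also have "\<dots> \<le> 4 * (\<integral>\<^sup>+v. ennreal (G (v::'a) * indicator {v. r\<^sup>2 \<le> (norm v)\<^sup>2} v) \<partial>lborel)"
      by (intro mult_right_mono) auto
    finally show ?thesis .
  qed
qed

theorem lemmaA9:
  fixes s :: "'a::euclidean_space" and p \<alpha> r :: real
  assumes "norm s = 1" and "p \<ge> 1" and "\<alpha> > 8"
    and "r\<^sup>2 = real DIM('a) + 2 * sqrt (\<alpha> * real DIM('a)) + 2 * \<alpha>"
  shows "cond_exp_event std_gaussian (\<lambda>v. \<bar>v \<bullet> s\<bar> powr p) {v. (norm v)\<^sup>2 \<ge> r\<^sup>2}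
         \<le> ennreal ((64 * \<alpha>) powr (p / 2) + 4 * (8 * \<alpha> + 2 * p) powr (p / 2))"
proof -
  note s = assms(1) and p = assms(2) and al = assms(3) and r = assms(4)
  define A where "A = {v::'a. (norm v)\<^sup>2 \<ge> r\<^sup>2}"
  define t where "t = 64 * \<alpha>"
  have t0: "t > 0" using al by (simp add: t_def)
  define B where "B = (64 * \<alpha>) powr (p / 2) + 4 * (8 * \<alpha> + 2 * p) powr (p / 2)"
  define c where "c = sqrt (2 * p) powr p"
  have c0: "c \<ge> 0" by (simp add: c_def)
  have Ameas[measurable]: "A \<in> sets borel" unfolding A_def by measurable
  let ?Z = "(\<integral>\<^sup>+v. ennreal (G (v::'a)) \<partial>lborel)"
  let ?N = "(\<integral>\<^sup>+v. ennreal (G (v::'a) * (\<bar>v \<bullet> s\<bar> powr p * indicator A v)) \<partial>lborel)"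
  let ?P = "(\<integral>\<^sup>+v. ennreal (G (v::'a) * indicator A v) \<partial>lborel)"
  let ?T = "(\<integral>\<^sup>+v. ennreal (G (v::'a) * (\<bar>v \<bullet> s\<bar> powr p * indicator {v. t < (v \<bullet> s)\<^sup>2} v)) \<partial>lborel)"
  have LB: "ennreal (2 * exp (- 24 * \<alpha>)) * ?Z \<le> 4 * ?P"
    using lower_all[OF s al r] by (simp add: A_def)
  have step1: "?N \<le> ennreal (t powr (p / 2)) * ?P + ?T"
  proof -
    have "?N \<le> (\<integral>\<^sup>+v. ennreal (t powr (p / 2)) * ennreal (G (v::'a) * indicator A v)
        + ennreal (G (v::'a) * (\<bar>v \<bullet> s\<bar> powr p * indicator {v. t < (v \<bullet> s)\<^sup>2} v)) \<partial>lborel)"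
    proof (intro nn_integral_mono)
      fix v :: 'a
      have Gv: "G v > 0" by (rule G_pos)
      show "ennreal (G v * (\<bar>v \<bullet> s\<bar> powr p * indicator A v))
          \<le> ennreal (t powr (p / 2)) * ennreal (G v * indicator A v)
            + ennreal (G v * (\<bar>v \<bullet> s\<bar> powr p * indicator {v. t < (v \<bullet> s)\<^sup>2} v))"
      proof (cases "t < (v \<bullet> s)\<^sup>2")
        case True
        have "ennreal (G v * (\<bar>v \<bullet> s\<bar> powr p * indicator A v)) \<le> ennreal (G v * (\<bar>v \<bullet> s\<bar> powr p * indicator {v. t < (v \<bullet> s)\<^sup>2} v))"
          using True Gv by (intro ennreal_leI) (auto simp: indicator_def)
        then show ?thesis by (simp add: add_increasing)
      next
        case False
        have "\<bar>v \<bullet> s\<bar> \<le> sqrt t" using False by (metis linorder_not_less real_sqrt_abs real_sqrt_le_mono)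
        then have "\<bar>v \<bullet> s\<bar> powr p \<le> sqrt t powr p" using p by (intro powr_mono2) auto
        also have "sqrt t powr p = t powr (p / 2)"
          using t0 by (simp add: powr_half_sqrt[symmetric] powr_powr)
        finally have fv: "\<bar>v \<bullet> s\<bar> powr p \<le> t powr (p / 2)" .
        have "G v * (\<bar>v \<bullet> s\<bar> powr p * indicator A v) \<le> t powr (p / 2) * (G v * indicator A v)"
          using fv Gv by (cases "v \<in> A") (auto simp: indicator_def)
        then have "ennreal (G v * (\<bar>v \<bullet> s\<bar> powr p * indicator A v)) \<le> ennreal (t powr (p / 2)) * ennreal (G v * indicator A v)"
          using Gv by (simp add: ennreal_mult[symmetric] ennreal_leI)
        then show ?thesis by (simp add: add_increasing2)
      qed
    qed
    also have "\<dots> = (\<integral>\<^sup>+v. ennreal (t powr (p / 2)) * ennreal (G (v::'a) * indicator A v) \<partial>lborel) + ?T"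
      by (rule nn_integral_add) measurable
    also have "(\<integral>\<^sup>+v. ennreal (t powr (p / 2)) * ennreal (G (v::'a) * indicator A v) \<partial>lborel) = ennreal (t powr (p / 2)) * ?P"
      by (rule nn_integral_cmult) measurable
    finally show ?thesis .
  qed
  have step2: "?T \<le> ennreal (4 * c) * ?P"
  proof -
    have "?T \<le> ennreal (2 * sqrt (2 * p) powr p * exp (- 3 * t / 8)) * ?Z"
      by (rule tail_int[OF s p t0])
    also have "\<dots> = ennreal c * (ennreal (2 * exp (- 24 * \<alpha>)) * ?Z)"
    proof -
      have e1: "2 * sqrt (2 * p) powr p * exp (- 3 * t / 8) = c * (2 * exp (- 24 * \<alpha>))"
        by (simp add: c_def t_def)
      have e2: "ennreal (c * (2 * exp (- 24 * \<alpha>))) = ennreal c * ennreal (2 * exp (- 24 * \<alpha>))"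
        using c0 by (rule ennreal_mult) simp
      show ?thesis unfolding e1 e2 by (simp only: mult.assoc)
    qed
    also have "\<dots> \<le> ennreal c * (4 * ?P)" using LB by (rule mult_left_mono) simp
    also have "\<dots> = ennreal (4 * c) * ?P" using c0 by (simp add: ennreal_mult mult_ac)
    finally show ?thesis .
  qed
  have cB: "t powr (p / 2) + 4 * c \<le> B"
  proof -
    have "c = (2 * p) powr (p / 2)"
      using p by (simp add: c_def powr_half_sqrt[symmetric] powr_powr)
    also have "\<dots> \<le> (8 * \<alpha> + 2 * p) powr (p / 2)" using al p by (intro powr_mono2) auto
    finally show ?thesis by (simp add: B_def t_def)
  qed
  have NB: "?N \<le> ennreal B * ?P"
  proof -
    have "?N \<le> ennreal (t powr (p / 2)) * ?P + ennreal (4 * c) * ?P" using step1 step2 by (meson add_left_mono order_trans)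
    also have "\<dots> = ennreal (t powr (p / 2) + 4 * c) * ?P" using c0 by (simp add: distrib_right ennreal_plus)
    also have "\<dots> \<le> ennreal B * ?P" using cB by (intro mult_right_mono ennreal_leI) auto
    finally show ?thesis .
  qed
  have Ppos: "?P > 0"
  proof -
    have "?Z = ennreal ((sqrt (2*pi))^DIM('a))" by (rule Z_val)
    then have "ennreal (2 * exp (- 24 * \<alpha>)) * ?Z > 0" by (simp add: ennreal_mult[symmetric])
    then have "4 * ?P > 0" using LB by (rule less_le_trans)
    then show ?thesis by (simp add: zero_less_iff_neq_zero)
  qed
  define k where "k = (2 * pi) powr (- real DIM('a) / 2)"
  have k0: "k > 0" by (simp add: k_def)
  have std: "std_gaussian = density lborel (\<lambda>x::'a. ennreal (k * G x))"
    by (simp add: std_gaussian_def k_def G_def)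
  have num: "(\<integral>\<^sup>+x\<in>A. ennreal (\<bar>x \<bullet> s\<bar> powr p) \<partial>std_gaussian) = ennreal k * ?N"
  proof -
    have "(\<integral>\<^sup>+x\<in>A. ennreal (\<bar>x \<bullet> s\<bar> powr p) \<partial>std_gaussian)
        = (\<integral>\<^sup>+x. ennreal (k * G x) * (ennreal (\<bar>x \<bullet> s\<bar> powr p) * indicator A x) \<partial>lborel)"
      unfolding std by (rule nn_integral_density) measurable
    also have "\<dots> = (\<integral>\<^sup>+x. ennreal k * ennreal (G (x::'a) * (\<bar>x \<bullet> s\<bar> powr p * indicator A x)) \<partial>lborel)"
      using k0 by (intro nn_integral_cong) (auto simp: indicator_def ennreal_mult G_pos less_imp_le mult.assoc)
    also have "\<dots> = ennreal k * ?N" by (rule nn_integral_cmult) measurable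
    finally show ?thesis .
  qed
  have den: "emeasure std_gaussian A = ennreal k * ?P"
  proof -
    have "emeasure std_gaussian A = (\<integral>\<^sup>+x\<in>A. ennreal (k * G x) \<partial>lborel)"
      unfolding std by (rule emeasure_density) measurable
    also have "\<dots> = (\<integral>\<^sup>+x. ennreal k * ennreal (G (x::'a) * indicator A x) \<partial>lborel)"
      using k0 by (intro nn_integral_cong) (auto simp: indicator_def ennreal_mult G_pos less_imp_le)
    also have "\<dots> = ennreal k * ?P" by (rule nn_integral_cmult) measurable
    finally show ?thesis .
  qed
  have "cond_exp_event std_gaussian (\<lambda>v. \<bar>v \<bullet> s\<bar> powr p) A = (ennreal k * ?N) / (ennreal k * ?P)"
    unfolding cond_exp_event_def num den ..
  also have "\<dots> \<le> ennreal B"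
  proof (rule divide_le_posI_ennreal)
    show "0 < ennreal k * ?P" using k0 Ppos by (simp add: ennreal_zero_less_mult_iff)
    show "ennreal k * ?N \<le> ennreal k * ?P * ennreal B"
      using NB by (simp add: mult_left_mono mult.assoc mult.commute[of "ennreal B"])
  qed
  finally show ?thesis by (simp add: A_def B_def)
qed

end
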